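(* Let $H_A,H_B$ be complex Hilbert spaces of dimensions $d_A,d_B$. Let $\Pi_{A1},\dots,\Pi_{A\mathfrak a}$ be orthogonal projectors on $H_A$ with $\Pi_{Aa}\Pi_{Ac}=\delta_{ac}\Pi_{Aa}$ and $\sum_a\Pi_{Aa}=\mathbf 1_A$, and $\Pi_{B1},\dots,\Pi_{B\mathfrak b}$ orthogonal projectors on $H_B$ with $\Pi_{Bb}\Pi_{Bd}=\delta_{bd}\Pi_{Bb}$ and $\sum_b\Pi_{Bb}=\mathbf 1_B$. For a unit vector $\ket s\in H_A\otimes H_B$ let $p_{ab}=\bra s(\Pi_{Aa}\otimes\Pi_{Bb})\ket s$ and $\mathcal R_{ab}=\mathrm{rank}(\ket s)-\mathrm{rank}[(\Pi_{Aa}\otimes\Pi_{Bb})\ket s]$. Then $\sum_{a,b}p_{ab}\mathcal R_{ab}\le (d_A+d_B)-\sum_{a,b}p_{ab}\,[\mathrm{Tr}(\Pi_{Aa})+\mathrm{Tr}(\Pi_{Bb})].$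
   Context: The rank of a vector $\ket s\in H_A\otimes H_B$ is its Schmidt rank: the least $n$ such that $\ket s=\sum_{i=1}^n\ket{a_i}\otimes\ket{b_i}$ with $\ket{a_i}\in H_A,\ket{b_i}\in H_B$; the zero vector has rank $0$. *)

theory Defs
  imports "HOL-Analysis.Analysis"
begin

text \<open>Finite-dimensional complex Hilbert spaces H_A = complex^'a, H_B = complex^'b
  (dimensions CARD('a), CARD('b)); H_A tensor H_B = complex^('a \<times> 'b).\<close>

definition cinner_vec :: "complex^'n \<Rightarrow> complex^'n \<Rightarrow> complex" where
  "cinner_vec u v = (\<Sum>i\<in>UNIV. cnj (u $ i) * v $ i)"

definition mat_adj :: "complex^'n^'n \<Rightarrow> complex^'n^'n" where
  "mat_adj P = (\<chi> i j. cnj (P $ j $ i))"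

definition orth_projector :: "complex^'n^'n \<Rightarrow> bool" where
  "orth_projector P \<longleftrightarrow> P ** P = P \<and> mat_adj P = P"

definition tensor_vec :: "complex^'a \<Rightarrow> complex^'b \<Rightarrow> complex^('a \<times> 'b)" where
  "tensor_vec u v = (\<chi> p. u $ fst p * v $ snd p)"

definition tensor_op :: "complex^'a^'a \<Rightarrow> complex^'b^'b \<Rightarrow> complex^('a \<times> 'b) \<Rightarrow> complex^('a \<times> 'b)" where
  "tensor_op M N s = (\<chi> p. \<Sum>q\<in>UNIV. M $ fst p $ fst q * N $ snd p $ snd q * s $ q)"

definition schmidt_rank :: "complex^(('a::finite) \<times> ('b::finite)) \<Rightarrow> nat" where
  "schmidt_rank s = (LEAST n. \<exists>(u::nat \<Rightarrow> complex^'a) (v::nat \<Rightarrow> complex^'b).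
      s = (\<Sum>i<n. tensor_vec (u i) (v i)))"

end

theory Submission
  imports Defs
begin

lemma idem_fact:
  fixes M :: "complex^'n^'n"
  assumes idem: "M ** M = M"
  shows "\<exists>B g. finite B \<and> trace M = of_nat (card B) \<and>
     (\<forall>\<alpha> j. M$\<alpha>$j = (\<Sum>b\<in>B. g b j * b$\<alpha>))"
proof -
  define C where "C = {(\<chi> i. M$i$j) | j. True}"
  obtain B where BC: "B \<subseteq> C" and ind: "vec.independent B" and sp: "C \<subseteq> vec.span B"
    using vec.basis_exists[of C] by metis
  have fin: "finite B" using ind by (simp add: vec.independent_explicit)
  have "\<forall>j. \<exists>u. (\<chi> i. M$i$j) = (\<Sum>v\<in>B. u v *s v)"
  proof
    fix j
    have "(\<chi> i. M$i$j) \<in> vec.span B" using sp C_def by blast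
    then show "\<exists>u. (\<chi> i. M$i$j) = (\<Sum>v\<in>B. u v *s v)"
      using vec.span_finite[OF fin] by auto
  qed
  then obtain g' where g': "\<And>j. (\<chi> i. M$i$j) = (\<Sum>v\<in>B. g' j v *s v)" by metis
  define g where "g b j = g' j b" for b j
  have ent: "M$\<alpha>$j = (\<Sum>b\<in>B. g b j * b$\<alpha>)" for \<alpha> j
  proof -
    have "M$\<alpha>$j = (\<chi> i. M$i$j)$\<alpha>" by simp
    also have "\<dots> = (\<Sum>b\<in>B. g b j * b$\<alpha>)"
      unfolding g' g_def by (simp add: sum_component)
    finally show ?thesis .
  qed
  have fix_: "M *v b = b" if bB: "b \<in> B" for b
  proof -
    obtain j0 where b: "b = (\<chi> i. M$i$j0)" using bB BC C_def by blast
    have "(M *v b)$i = (M ** M)$i$j0" for i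
      unfolding b by (simp add: matrix_vector_mult_def matrix_matrix_mult_def)
    then show ?thesis using idem by (simp add: vec_eq_iff b)
  qed
  have diag: "(\<Sum>j\<in>UNIV. g b0 j * b0$j) = 1" if b0: "b0 \<in> B" for b0
  proof -
    define h where "h b = (\<Sum>j\<in>UNIV. g b j * b0$j) - (if b = b0 then 1 else 0)" for b
    have "(\<Sum>b\<in>B. h b *s b) = 0"
    proof (subst vec_eq_iff, intro allI)
      fix l
      have e1: "(\<Sum>b\<in>B. (\<Sum>j\<in>UNIV. g b j * b0$j) * b$l) = b0$l"
      proof -
        have "(\<Sum>b\<in>B. (\<Sum>j\<in>UNIV. g b j * b0$j) * b$l)
            = (\<Sum>j\<in>UNIV. (\<Sum>b\<in>B. g b j * b$l) * b0$j)"
          unfolding sum_distrib_left sum_distrib_right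
          by (subst sum.swap) (simp add: mult_ac)
        also have "\<dots> = (\<Sum>j\<in>UNIV. M$l$j * b0$j)" by (simp add: ent)
        also have "\<dots> = (M *v b0)$l" by (simp add: matrix_vector_mult_def)
        also have "\<dots> = b0$l" using fix_[OF b0] by simp
        finally show ?thesis .
      qed
      have e2: "(\<Sum>b\<in>B. (if b = b0 then 1 else 0) * b$l) = b0$l"
      proof -
        have e: "\<And>b. (if b = b0 then 1 else 0) * b$l = (if b = b0 then b$l else 0)" by simp
        show ?thesis using fin b0 by (simp add: e)
      qed
      show "(\<Sum>b\<in>B. h b *s b) $ l = 0 $ l"
        unfolding h_def using e1 e2
        by (simp add: sum_component left_diff_distrib sum_subtractf)
    qed
    moreover have "\<forall>c. (\<Sum>v\<in>B. c v *s v) = 0 \<longrightarrow> (\<forall>v\<in>B. c v = 0)"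
      using ind by (simp add: vec.independent_explicit)
    ultimately have "h b0 = 0" using b0 by blast
    then show ?thesis unfolding h_def by simp
  qed
  have "trace M = (\<Sum>\<alpha>\<in>UNIV. \<Sum>b\<in>B. g b \<alpha> * b$\<alpha>)" by (simp add: trace_def ent)
  also have "\<dots> = (\<Sum>b\<in>B. \<Sum>\<alpha>\<in>UNIV. g b \<alpha> * b$\<alpha>)" by (rule sum.swap)
  also have "\<dots> = (\<Sum>b\<in>B. 1)" using diag by simp
  also have "\<dots> = of_nat (card B)" by simp
  finally show ?thesis using fin ent by blast
qed


lemma mm_sub_left: "(A::complex^'n^'n) ** (B - C) = A ** B - A ** C"
  by (simp add: vec_eq_iff matrix_matrix_mult_def sum_subtractf right_diff_distrib)

lemma mm_sub_right: "((B::complex^'n^'n) - C) ** A = B ** A - C ** A"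
  by (simp add: vec_eq_iff matrix_matrix_mult_def sum_subtractf left_diff_distrib)

lemma idem_compl:
  fixes P :: "complex^'n^'n"
  assumes "P ** P = P"
  shows "(mat 1 - P) ** (mat 1 - P) = mat 1 - P"
  using assms by (simp add: mm_sub_left mm_sub_right)

lemma sr_nat:
  fixes s :: "complex^('a::finite \<times> 'b::finite)"
  assumes fin: "finite I" and s: "s = (\<Sum>i\<in>I. tensor_vec (u i) (v i))"
  shows "\<exists>u' v'. s = (\<Sum>i<card I. tensor_vec (u' i) (v' i))"
proof -
  obtain h where h: "bij_betw h {0..<card I} I" using ex_bij_betw_nat_finite[OF fin] by blast
  have "s = (\<Sum>i\<in>{0..<card I}. tensor_vec (u (h i)) (v (h i)))"
    unfolding s using sum.reindex_bij_betw[OF h, of "\<lambda>i. tensor_vec (u i) (v i)"] by simp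
  then show ?thesis by (auto simp: atLeast0LessThan)
qed

lemma sr_le:
  fixes s :: "complex^('a::finite \<times> 'b::finite)"
  assumes fin: "finite I" and s: "s = (\<Sum>i\<in>I. tensor_vec (u i) (v i))"
  shows "schmidt_rank s \<le> card I"
proof -
  obtain u' v' where "s = (\<Sum>i<card I. tensor_vec (u' i) (v' i))" using sr_nat[OF fin s] by blast
  then show ?thesis unfolding schmidt_rank_def by (intro Least_le) blast
qed

lemma sr_ex:
  fixes s :: "complex^('a::finite \<times> 'b::finite)"
  shows "\<exists>u v. s = (\<Sum>i<schmidt_rank s. tensor_vec (u i) (v i))"
proof -
  define u :: "'a \<Rightarrow> complex^'a" where "u a = (\<chi> x. if x = a then 1 else 0)" for a
  define v :: "'a \<Rightarrow> complex^'b" where "v a = (\<chi> y. s $ (a, y))" for a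
  have "s = (\<Sum>a\<in>UNIV. tensor_vec (u a) (v a))"
  proof -
    have e: "\<And>x a (c::complex). (if x = a then 1 else 0) * c = (if x = a then c else 0)" by simp
    show ?thesis by (simp add: vec_eq_iff sum_component tensor_vec_def u_def v_def e)
  qed
  from sr_nat[OF finite_class.finite_UNIV this] obtain u' v'
    where "s = (\<Sum>i<CARD('a). tensor_vec (u' i) (v' i))" by blast
  then have ex: "\<exists>(n::nat) u v. s = (\<Sum>i<n. tensor_vec (u i) (v i))" by (intro exI)
  show ?thesis unfolding schmidt_rank_def by (rule LeastI_ex[OF ex])
qed

lemma sr_add:
  fixes x y :: "complex^('a::finite \<times> 'b::finite)"
  shows "schmidt_rank (x + y) \<le> schmidt_rank x + schmidt_rank y"
proof -
  obtain u1 v1 where 1: "x = (\<Sum>i<schmidt_rank x. tensor_vec (u1 i) (v1 i))" using sr_ex by blast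
  obtain u2 v2 where 2: "y = (\<Sum>i<schmidt_rank y. tensor_vec (u2 i) (v2 i))" using sr_ex by blast
  let ?I = "{..<schmidt_rank x} <+> {..<schmidt_rank y}"
  have "(\<Sum>i\<in>?I. tensor_vec (case_sum u1 u2 i) (case_sum v1 v2 i)) =
     (\<Sum>i<schmidt_rank x. tensor_vec (u1 i) (v1 i)) + (\<Sum>i<schmidt_rank y. tensor_vec (u2 i) (v2 i))"
    by (subst sum.Plus) (simp_all add: comp_def)
  then have "x + y = (\<Sum>i\<in>?I. tensor_vec (case_sum u1 u2 i) (case_sum v1 v2 i))"
    by (simp only: 1[symmetric] 2[symmetric])
  from sr_le[OF _ this] show ?thesis by (simp add: card_Plus)
qed

lemma tensor_op_add_left:
  "tensor_op (M + M') N s = tensor_op M N s + tensor_op M' N s"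
  by (simp add: vec_eq_iff tensor_op_def distrib_right sum.distrib)

lemma tensor_op_add_right:
  "tensor_op M (N + N') s = tensor_op M N s + tensor_op M N' s"
  by (simp add: vec_eq_iff tensor_op_def distrib_right distrib_left sum.distrib)

lemma tensor_op_sum_left:
  "tensor_op (\<Sum>a\<in>A. f a) N s = (\<Sum>a\<in>A. tensor_op (f a) N s)"
proof -
  have "(tensor_op (\<Sum>a\<in>A. f a) N s)$p = (\<Sum>a\<in>A. tensor_op (f a) N s)$p" for p
  proof -
    have "(tensor_op (\<Sum>a\<in>A. f a) N s)$p = (\<Sum>q\<in>UNIV. \<Sum>a\<in>A. f a $ fst p $ fst q * N $ snd p $ snd q * s $ q)"
      by (simp add: tensor_op_def sum_component sum_distrib_right)
    also have "\<dots> = (\<Sum>a\<in>A. \<Sum>q\<in>UNIV. f a $ fst p $ fst q * N $ snd p $ snd q * s $ q)"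
      by (rule sum.swap)
    finally show ?thesis by (simp add: tensor_op_def sum_component)
  qed
  then show ?thesis by (simp add: vec_eq_iff)
qed

lemma tensor_op_sum_right:
  "tensor_op M (\<Sum>a\<in>A. f a) s = (\<Sum>a\<in>A. tensor_op M (f a) s)"
proof -
  have "(tensor_op M (\<Sum>a\<in>A. f a) s)$p = (\<Sum>a\<in>A. tensor_op M (f a) s)$p" for p
  proof -
    have "(tensor_op M (\<Sum>a\<in>A. f a) s)$p = (\<Sum>q\<in>UNIV. \<Sum>a\<in>A. M $ fst p $ fst q * f a $ snd p $ snd q * s $ q)"
      by (simp add: tensor_op_def sum_component sum_distrib_right sum_distrib_left)
    also have "\<dots> = (\<Sum>a\<in>A. \<Sum>q\<in>UNIV. M $ fst p $ fst q * f a $ snd p $ snd q * s $ q)"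
      by (rule sum.swap)
    finally show ?thesis by (simp add: tensor_op_def sum_component)
  qed
  then show ?thesis by (simp add: vec_eq_iff)
qed

lemma tensor_op_id: "tensor_op (mat 1) (mat 1) s = s"
proof -
  have "(\<Sum>q\<in>UNIV. (mat 1::complex^'a^'a) $ fst p $ fst q * (mat 1::complex^'b^'b) $ snd p $ snd q * s $ q)
        = (\<Sum>q\<in>UNIV. if q = p then s $ q else 0)" for p :: "'a \<times> 'b"
    by (rule sum.cong) (auto simp: mat_def prod_eq_iff)
  then show ?thesis by (simp add: vec_eq_iff tensor_op_def)
qed

lemma cinner_add: "cinner_vec s (x + y) = cinner_vec s x + cinner_vec s y"
  by (simp add: cinner_vec_def distrib_left sum.distrib)

lemma cinner_sum: "cinner_vec s (\<Sum>a\<in>A. f a) = (\<Sum>a\<in>A. cinner_vec s (f a))"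
proof -
  have "(\<Sum>i\<in>UNIV. \<Sum>a\<in>A. cnj (s $ i) * f a $ i) = (\<Sum>a\<in>A. \<Sum>i\<in>UNIV. cnj (s $ i) * f a $ i)"
    by (rule sum.swap)
  then show ?thesis by (simp add: cinner_vec_def sum_component sum_distrib_left)
qed

lemma cinner_self: "cinner_vec x x = of_real ((norm x)^2)"
proof -
  have "cinner_vec x x = (\<Sum>i\<in>UNIV. of_real ((norm (x$i))^2))"
    unfolding cinner_vec_def
    by (intro sum.cong refl) (metis complex_norm_square mult.commute)
  also have "\<dots> = of_real ((norm x)^2)"
    by (simp add: norm_vec_def L2_set_def sum_nonneg)
  finally show ?thesis .
qed


lemma prod_sum_UNIV:
  fixes f :: "'a::finite \<Rightarrow> complex" and g :: "'b::finite \<Rightarrow> complex"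
  shows "(\<Sum>q\<in>UNIV. f (fst q) * g (snd q)) = (\<Sum>i\<in>UNIV. f i) * (\<Sum>j\<in>UNIV. g j)"
proof -
  have "(\<Sum>i\<in>UNIV. f i) * (\<Sum>j\<in>UNIV. g j) = (\<Sum>i\<in>UNIV. \<Sum>j\<in>UNIV. f i * g j)"
    by (rule sum_product)
  also have "\<dots> = (\<Sum>(i,j)\<in>UNIV \<times> UNIV. f i * g j)" by (rule sum.cartesian_product)
  also have "\<dots> = (\<Sum>q\<in>UNIV. f (fst q) * g (snd q))"
    by (simp add: UNIV_Times_UNIV case_prod_beta)
  finally show ?thesis by simp
qed

lemma tensor_op_comp:
  "tensor_op M N (tensor_op M' N' s) = tensor_op (M ** M') (N ** N') s"
proof -
  have inner: "(\<Sum>q\<in>UNIV. M$fst p$fst q * N$snd p$snd q * (M'$fst q$fst r * N'$snd q$snd r))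
     = (M ** M')$fst p$fst r * (N ** N')$snd p$snd r" for p r
  proof -
    have "(M ** M')$fst p$fst r * (N ** N')$snd p$snd r
        = (\<Sum>i\<in>UNIV. M$fst p$i * M'$i$fst r) * (\<Sum>j\<in>UNIV. N$snd p$j * N'$j$snd r)"
      by (simp add: matrix_matrix_mult_def)
    also have "\<dots> = (\<Sum>q\<in>UNIV. (M$fst p$fst q * M'$fst q$fst r) * (N$snd p$snd q * N'$snd q$snd r))"
      by (rule prod_sum_UNIV[symmetric])
    finally show ?thesis by (simp add: mult_ac)
  qed
  have "(tensor_op M N (tensor_op M' N' s))$p = (tensor_op (M ** M') (N ** N') s)$p" for p
  proof -
    have "(tensor_op M N (tensor_op M' N' s))$p
        = (\<Sum>q\<in>UNIV. \<Sum>r\<in>UNIV. M$fst p$fst q * N$snd p$snd q * (M'$fst q$fst r * N'$snd q$snd r) * s$r)"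
      by (simp add: tensor_op_def sum_distrib_left mult_ac)
    also have "\<dots> = (\<Sum>r\<in>UNIV. \<Sum>q\<in>UNIV. M$fst p$fst q * N$snd p$snd q * (M'$fst q$fst r * N'$snd q$snd r) * s$r)"
      by (rule sum.swap)
    also have "\<dots> = (\<Sum>r\<in>UNIV. (M ** M')$fst p$fst r * (N ** N')$snd p$snd r * s$r)"
      by (simp add: sum_distrib_right[symmetric] inner)
    finally show ?thesis by (simp add: tensor_op_def)
  qed
  then show ?thesis by (simp add: vec_eq_iff)
qed

lemma tensor_op_adj:
  "cinner_vec x (tensor_op M N y) = cinner_vec (tensor_op (mat_adj M) (mat_adj N) x) y"
proof -
  have "cinner_vec x (tensor_op M N y)
      = (\<Sum>p\<in>UNIV. \<Sum>q\<in>UNIV. cnj (x$p) * M$fst p$fst q * N$snd p$snd q * y$q)"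
    by (simp add: cinner_vec_def tensor_op_def sum_distrib_left mult_ac)
  also have "\<dots> = (\<Sum>q\<in>UNIV. \<Sum>p\<in>UNIV. cnj (x$p) * M$fst p$fst q * N$snd p$snd q * y$q)"
    by (rule sum.swap)
  also have "\<dots> = cinner_vec (tensor_op (mat_adj M) (mat_adj N) x) y"
    by (simp add: cinner_vec_def tensor_op_def mat_adj_def sum_distrib_right sum_distrib_left mult_ac)
  finally show ?thesis .
qed

lemma pos_proj:
  assumes "orth_projector P" "orth_projector Q"
  shows "0 \<le> Re (cinner_vec s (tensor_op P Q s))"
proof -
  have PP: "P ** P = P" "mat_adj P = P" "Q ** Q = Q" "mat_adj Q = Q"
    using assms by (auto simp: orth_projector_def)
  have "cinner_vec s (tensor_op P Q s) = cinner_vec s (tensor_op P Q (tensor_op P Q s))"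
    by (simp add: tensor_op_comp PP)
  also have "\<dots> = cinner_vec (tensor_op P Q s) (tensor_op P Q s)"
    by (simp add: tensor_op_adj PP)
  also have "\<dots> = of_real ((norm (tensor_op P Q s))^2)" by (rule cinner_self)
  finally show ?thesis by simp
qed

lemma rank_left:
  fixes M :: "complex^'a::finite^'a" and N :: "complex^'b::finite^'b"
  assumes fin: "finite B" and M: "\<And>\<alpha> j. M$\<alpha>$j = (\<Sum>b\<in>B. g b j * b$\<alpha>)"
  shows "schmidt_rank (tensor_op M N s) \<le> card B"
proof -
  define w where "w b = (\<chi> \<beta>. \<Sum>q\<in>UNIV. g b (fst q) * N$\<beta>$snd q * s$q)" for b
  have "(tensor_op M N s)$p = (\<Sum>b\<in>B. tensor_vec b (w b))$p" for p
  proof -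
    have "(tensor_op M N s)$p = (\<Sum>q\<in>UNIV. \<Sum>b\<in>B. b$fst p * (g b (fst q) * N$snd p$snd q * s$q))"
      by (simp add: tensor_op_def M sum_distrib_right sum_distrib_left mult_ac)
    also have "\<dots> = (\<Sum>b\<in>B. \<Sum>q\<in>UNIV. b$fst p * (g b (fst q) * N$snd p$snd q * s$q))"
      by (rule sum.swap)
    finally show ?thesis by (simp add: tensor_vec_def w_def sum_distrib_left)
  qed
  then have "tensor_op M N s = (\<Sum>b\<in>B. tensor_vec b (w b))" by (simp add: vec_eq_iff)
  then show ?thesis by (rule sr_le[OF fin])
qed

lemma rank_right:
  fixes M :: "complex^'a::finite^'a" and N :: "complex^'b::finite^'b"
  assumes fin: "finite B" and N: "\<And>\<alpha> j. N$\<alpha>$j = (\<Sum>b\<in>B. g b j * b$\<alpha>)"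
  shows "schmidt_rank (tensor_op M N s) \<le> card B"
proof -
  define w where "w b = (\<chi> \<alpha>. \<Sum>q\<in>UNIV. M$\<alpha>$fst q * g b (snd q) * s$q)" for b
  have "(tensor_op M N s)$p = (\<Sum>b\<in>B. tensor_vec (w b) b)$p" for p
  proof -
    have "(tensor_op M N s)$p = (\<Sum>q\<in>UNIV. \<Sum>b\<in>B. (M$fst p$fst q * g b (snd q) * s$q) * b$snd p)"
      by (simp add: tensor_op_def N sum_distrib_right sum_distrib_left mult_ac)
    also have "\<dots> = (\<Sum>b\<in>B. \<Sum>q\<in>UNIV. (M$fst p$fst q * g b (snd q) * s$q) * b$snd p)"
      by (rule sum.swap)
    finally show ?thesis by (simp add: tensor_vec_def w_def sum_distrib_right)
  qed
  then have "tensor_op M N s = (\<Sum>b\<in>B. tensor_vec (w b) b)" by (simp add: vec_eq_iff)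
  then show ?thesis by (rule sr_le[OF fin])
qed


lemma pair_bound:
  fixes P :: "complex^'a::finite^'a" and Q :: "complex^'b::finite^'b"
    and s :: "complex^('a \<times> 'b)"
  assumes oP: "orth_projector P" and oQ: "orth_projector Q"
  shows "Re (cinner_vec s (tensor_op P Q s)) *
            (real (schmidt_rank s) - real (schmidt_rank (tensor_op P Q s)))
         \<le> Re (cinner_vec s (tensor_op P Q s)) * real (CARD('a) + CARD('b)) -
           Re (cinner_vec s (tensor_op P Q s) * (trace P + trace Q))"
proof -
  define c where "c = cinner_vec s (tensor_op P Q s)"
  have c0: "0 \<le> Re c" unfolding c_def by (rule pos_proj[OF oP oQ])
  have PP: "P ** P = P" "Q ** Q = Q" using oP oQ by (auto simp: orth_projector_def)
  obtain BA gA where fA: "finite BA" and tA: "trace (mat 1 - P) = of_nat (card BA)"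
    and eA: "\<forall>\<alpha> j. (mat 1 - P)$\<alpha>$j = (\<Sum>b\<in>BA. gA b j * b$\<alpha>)"
    using idem_fact[OF idem_compl[OF PP(1)]] by blast
  obtain BB gB where fB: "finite BB" and tB: "trace (mat 1 - Q) = of_nat (card BB)"
    and eB: "\<forall>\<alpha> j. (mat 1 - Q)$\<alpha>$j = (\<Sum>b\<in>BB. gB b j * b$\<alpha>)"
    using idem_fact[OF idem_compl[OF PP(2)]] by blast
  have trP: "trace P = of_nat CARD('a) - of_nat (card BA)"
  proof -
    have "of_nat CARD('a) - trace P = of_nat (card BA)" using tA by (simp add: trace_sub trace_I)
    then show ?thesis by (simp add: algebra_simps)
  qed
  have trQ: "trace Q = of_nat CARD('b) - of_nat (card BB)"
  proof -
    have "of_nat CARD('b) - trace Q = of_nat (card BB)" using tB by (simp add: trace_sub trace_I)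
    then show ?thesis by (simp add: algebra_simps)
  qed
  define t where "t = real CARD('a) - real (card BA) + (real CARD('b) - real (card BB))"
  have tt: "trace P + trace Q = complex_of_real t" unfolding t_def trP trQ by simp
  have dec: "s = tensor_op P Q s + tensor_op (mat 1 - P) Q s + tensor_op (mat 1) (mat 1 - Q) s"
  proof -
    have "tensor_op P Q s + tensor_op (mat 1 - P) Q s = tensor_op (mat 1) Q s"
      by (simp add: tensor_op_add_left[symmetric])
    moreover have "tensor_op (mat 1) Q s + tensor_op (mat 1) (mat 1 - Q) s = s"
      by (simp add: tensor_op_add_right[symmetric] tensor_op_id)
    ultimately show ?thesis by simp
  qed
  have r1: "schmidt_rank (tensor_op (mat 1 - P) Q s) \<le> card BA"
    using rank_left[OF fA] eA by blast
  have r2: "schmidt_rank (tensor_op (mat 1) (mat 1 - Q) s) \<le> card BB"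
    using rank_right[OF fB] eB by blast
  have "schmidt_rank s \<le> schmidt_rank (tensor_op P Q s + tensor_op (mat 1 - P) Q s)
         + schmidt_rank (tensor_op (mat 1) (mat 1 - Q) s)"
    by (subst dec) (rule sr_add)
  also have "\<dots> \<le> schmidt_rank (tensor_op P Q s) + schmidt_rank (tensor_op (mat 1 - P) Q s)
         + schmidt_rank (tensor_op (mat 1) (mat 1 - Q) s)"
    using sr_add by simp
  finally have "schmidt_rank s \<le> schmidt_rank (tensor_op P Q s) + card BA + card BB"
    using r1 r2 by linarith
  then have rk: "real (schmidt_rank s) - real (schmidt_rank (tensor_op P Q s))
      \<le> real (CARD('a) + CARD('b)) - t"
    unfolding t_def by simp
  have "Re c * (real (schmidt_rank s) - real (schmidt_rank (tensor_op P Q s)))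
      \<le> Re c * (real (CARD('a) + CARD('b)) - t)"
    by (rule mult_left_mono[OF rk c0])
  also have "\<dots> = Re c * real (CARD('a) + CARD('b)) - Re (c * (trace P + trace Q))"
    by (simp add: tt right_diff_distrib)
  finally show ?thesis unfolding c_def .
qed

theorem mainTheorem11:
  fixes PA :: "nat \<Rightarrow> complex^'a^'a" and PB :: "nat \<Rightarrow> complex^'b^'b"
    and nA nB :: nat and s :: "complex^('a \<times> 'b)"
  assumes projA: "\<And>a. a < nA \<Longrightarrow> orth_projector (PA a)"
    and orthA: "\<And>a c. a < nA \<Longrightarrow> c < nA \<Longrightarrow> PA a ** PA c = (if a = c then PA a else 0)"
    and completeA: "(\<Sum>a<nA. PA a) = mat 1"
    and projB: "\<And>b. b < nB \<Longrightarrow> orth_projector (PB b)"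
    and orthB: "\<And>b d. b < nB \<Longrightarrow> d < nB \<Longrightarrow> PB b ** PB d = (if b = d then PB b else 0)"
    and completeB: "(\<Sum>b<nB. PB b) = mat 1"
    and unit: "norm s = 1"
  shows "(\<Sum>a<nA. \<Sum>b<nB.
            Re (cinner_vec s (tensor_op (PA a) (PB b) s)) *
            (real (schmidt_rank s) - real (schmidt_rank (tensor_op (PA a) (PB b) s))))
         \<le> real (CARD('a) + CARD('b)) -
           (\<Sum>a<nA. \<Sum>b<nB.
            Re (cinner_vec s (tensor_op (PA a) (PB b) s) * (trace (PA a) + trace (PB b))))"
proof -
  define D where "D = real (CARD('a) + CARD('b))"
  have tot: "(\<Sum>a<nA. \<Sum>b<nB. cinner_vec s (tensor_op (PA a) (PB b) s)) = 1"
  proof -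
    have "cinner_vec s (tensor_op (\<Sum>a<nA. PA a) (\<Sum>b<nB. PB b) s)
        = (\<Sum>a<nA. \<Sum>b<nB. cinner_vec s (tensor_op (PA a) (PB b) s))"
      by (simp only: tensor_op_sum_left, simp only: tensor_op_sum_right cinner_sum)
    then have "(\<Sum>a<nA. \<Sum>b<nB. cinner_vec s (tensor_op (PA a) (PB b) s))
        = cinner_vec s (tensor_op (\<Sum>a<nA. PA a) (\<Sum>b<nB. PB b) s)" by simp
    also have "\<dots> = 1" using unit by (simp add: completeA completeB tensor_op_id cinner_self)
    finally show ?thesis .
  qed
  have totR: "(\<Sum>a<nA. \<Sum>b<nB. Re (cinner_vec s (tensor_op (PA a) (PB b) s))) = 1"
    using arg_cong[OF tot, of Re] by (simp add: Re_sum)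
  have "(\<Sum>a<nA. \<Sum>b<nB.
            Re (cinner_vec s (tensor_op (PA a) (PB b) s)) *
            (real (schmidt_rank s) - real (schmidt_rank (tensor_op (PA a) (PB b) s))))
      \<le> (\<Sum>a<nA. \<Sum>b<nB. Re (cinner_vec s (tensor_op (PA a) (PB b) s)) * D -
            Re (cinner_vec s (tensor_op (PA a) (PB b) s) * (trace (PA a) + trace (PB b))))"
    unfolding D_def by (intro sum_mono pair_bound projA projB) auto
  also have "\<dots> = D * (\<Sum>a<nA. \<Sum>b<nB. Re (cinner_vec s (tensor_op (PA a) (PB b) s))) -
           (\<Sum>a<nA. \<Sum>b<nB.
            Re (cinner_vec s (tensor_op (PA a) (PB b) s) * (trace (PA a) + trace (PB b))))"
    by (simp add: sum_subtractf sum_distrib_left mult.commute)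
  finally show ?thesis using totR D_def by simp
qed

end
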